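(* Let $x\in P$ be a search point in the population $P$ of DEMO on the weighted vertex cover problem such that $Cost(x)+2\cdot LP(x)\le 2\cdot OPT$ and $b_2(x)>0$. Then there exists a 1-bit flip of $x$ leading to a search point $x'$ with $Cost(x')+2\cdot LP(x')\le 2\cdot OPT$ and $b_2(x')<b_2(x)$.
   Context: Weighted vertex cover: $G=(V,E)$, $V=\{v_1,\dots,v_n\}$, $w:V\to\mathbb{N}^+$; $OPT$ is the minimum weight of a vertex cover. Search points $x\in\{0,1\}^n$; $Cost(x)=\sum_i w(v_i)x_i$; $G(x)=(V(x),E(x))$ with $V(x)=V\setminus\{v_i:x_i=1\}$, $E(x)$ = edges with no selected endpoint; $LP(x)$ = optimal value of: minimize $\sum_{v_i\in V(x)}w(v_i)y_i$ s.t. $y_i+y_j\ge1$ for $\{v_i,v_j\}\in E(x)$, $0\le y_i\le1$. $f(x)=(Cost(x),LP(x))$, $f(x)\le f(y)$ componentwise. DEMO: $\delta=\frac1{2n}$, $b_1(x)=\lceil\log_{1+\delta}(1+Cost(x))\rceil$, $b_2(x)=\lceil\log_{1+\delta}(1+LP(x))\rceil$, $b=(b_1,b_2)$. Start with uniformly random $x$, $P=\{x\}$. Each iteration: choose $x\in P$ uniformly; create $x'$ by flipping each bit independently with probability $1/n$; if some $y\in P$ satisfies ($f(y)\le f(x')$ and $f(y)\ne f(x')$) or ($b(y)=b(x')$ and $Cost(y)+2LP(y)\le Cost(x')+2LP(x')$), discard $x'$; otherwise add $x'$ and delete all other $z\in P$ with $f(x')\le f(z)$ or $b(z)=b(x')$.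 *)

theory Defs
  imports Complex_Main
begin

text \<open>A search point x :: nat \<Rightarrow> bool; bit i (for i < n) selects vertex i.\<close>

definition wvc_graph :: "nat \<Rightarrow> nat set set \<Rightarrow> (nat \<Rightarrow> nat) \<Rightarrow> bool" where
  "wvc_graph n E w \<longleftrightarrow>
     (\<forall>e\<in>E. \<exists>i j. i < n \<and> j < n \<and> i \<noteq> j \<and> e = {i, j}) \<and> (\<forall>i<n. w i > 0)"

definition Cost :: "nat \<Rightarrow> (nat \<Rightarrow> nat) \<Rightarrow> (nat \<Rightarrow> bool) \<Rightarrow> real" where
  "Cost n w x = (\<Sum>i<n. real (w i) * (if x i then 1 else 0))"

definition is_vertex_cover :: "nat \<Rightarrow> nat set set \<Rightarrow> (nat \<Rightarrow> bool) \<Rightarrow> bool" where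
  "is_vertex_cover n E x \<longleftrightarrow> (\<forall>e\<in>E. \<exists>i\<in>e. i < n \<and> x i)"

definition OPT :: "nat \<Rightarrow> nat set set \<Rightarrow> (nat \<Rightarrow> nat) \<Rightarrow> real" where
  "OPT n E w = Inf {Cost n w x | x. is_vertex_cover n E x}"

definition Vx :: "nat \<Rightarrow> (nat \<Rightarrow> bool) \<Rightarrow> nat set" where
  "Vx n x = {i. i < n \<and> \<not> x i}"

definition Ex :: "nat set set \<Rightarrow> (nat \<Rightarrow> bool) \<Rightarrow> nat set set" where
  "Ex E x = {e\<in>E. \<forall>i\<in>e. \<not> x i}"

definition LP_feasible :: "nat \<Rightarrow> nat set set \<Rightarrow> (nat \<Rightarrow> bool) \<Rightarrow> (nat \<Rightarrow> real) \<Rightarrow> bool" where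
  "LP_feasible n E x y \<longleftrightarrow>
     (\<forall>i\<in>Vx n x. 0 \<le> y i \<and> y i \<le> 1) \<and>
     (\<forall>i j. {i, j} \<in> Ex E x \<longrightarrow> y i + y j \<ge> 1)"

text \<open>Optimal value of the LP relaxation on G(x) (the optimum is attained, so Inf = min).\<close>
definition LP :: "nat \<Rightarrow> nat set set \<Rightarrow> (nat \<Rightarrow> nat) \<Rightarrow> (nat \<Rightarrow> bool) \<Rightarrow> real" where
  "LP n E w x = Inf {(\<Sum>i\<in>Vx n x. real (w i) * y i) | y. LP_feasible n E x y}"

definition delta :: "nat \<Rightarrow> real" where
  "delta n = 1 / (2 * real n)"

definition b1 :: "nat \<Rightarrow> (nat \<Rightarrow> nat) \<Rightarrow> (nat \<Rightarrow> bool) \<Rightarrow> int" where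
  "b1 n w x = \<lceil>log (1 + delta n) (1 + Cost n w x)\<rceil>"

definition b2 :: "nat \<Rightarrow> nat set set \<Rightarrow> (nat \<Rightarrow> nat) \<Rightarrow> (nat \<Rightarrow> bool) \<Rightarrow> int" where
  "b2 n E w x = \<lceil>log (1 + delta n) (1 + LP n E w x)\<rceil>"

end

theory Submission
  imports Defs "HOL-Library.FuncSet"
begin

definition cst :: "nat \<Rightarrow> (nat\<Rightarrow>nat) \<Rightarrow> (nat\<Rightarrow>bool) \<Rightarrow> (nat\<Rightarrow>real) \<Rightarrow> real" where
  "cst n w x y = (\<Sum>i\<in>Vx n x. real (w i) * y i)"

definition nh :: "nat \<Rightarrow> (nat\<Rightarrow>bool) \<Rightarrow> (nat\<Rightarrow>real) \<Rightarrow> nat set" where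
  "nh n x y = {i\<in>Vx n x. y i \<noteq> 0 \<and> y i \<noteq> 1/2 \<and> y i \<noteq> 1}"

lemma finite_Vx: "finite (Vx n x)" unfolding Vx_def by auto
lemma finite_nh: "finite (nh n x y)" unfolding nh_def using finite_Vx by auto

lemma edge_in_V:
  assumes "wvc_graph n E w" "{i,j} \<in> Ex E x"
  shows "i \<in> Vx n x \<and> j \<in> Vx n x"
proof -
  from assms(2) have e: "{i,j} \<in> E" "\<not> x i" "\<not> x j" unfolding Ex_def by auto
  from assms(1) e(1) obtain a b where ab: "a<n" "b<n" "{i,j} = {a,b}" unfolding wvc_graph_def by blast
  have "i \<in> {a,b}" "j \<in> {a,b}" using ab(3) by blast+
  then show ?thesis using ab e unfolding Vx_def by auto
qed

lemma step:
  assumes G: "wvc_graph n E w" and F: "LP_feasible n E x y" and ne: "nh n x y \<noteq> {}"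
  shows "\<exists>z. LP_feasible n E x z \<and> cst n w x z \<le> cst n w x y \<and> card (nh n x z) < card (nh n x y)"
proof -
  define V where "V = Vx n x"
  define N where "N = nh n x y"
  have fN: "finite N" using finite_nh N_def by auto
  have NV: "N \<subseteq> V" unfolding N_def V_def nh_def by auto
  have b01: "\<And>i. i\<in>V \<Longrightarrow> 0 \<le> y i \<and> y i \<le> 1" using F unfolding LP_feasible_def V_def by auto
  define d where "d i = (if i \<in> N then (if y i > 1/2 then 1 else -1) else (0::real))" for i
  define W where "W = (\<Sum>i\<in>V. real (w i) * d i)"
  define s where "s = (if W \<le> 0 then 1 else (-1::real))"
  define e where "e i = s * d i" for i
  define dist where "dist i = (if e i = 1 then (if y i > 1/2 then 1 - y i else 1/2 - y i) else (if y i > 1/2 then y i - 1/2 else y i))" for i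
  define t where "t = Min (dist ` N)"
  define z where "z i = y i + t * e i" for i
  have Nprop: "0 < y i \<and> y i < 1 \<and> y i \<noteq> 1/2" if "i \<in> N" for i
  proof -
    have "i \<in> V" using that NV by auto
    then have "0 \<le> y i \<and> y i \<le> 1" using b01 by auto
    moreover have "y i \<noteq> 0 \<and> y i \<noteq> 1/2 \<and> y i \<noteq> 1" using that unfolding N_def nh_def by auto
    ultimately show ?thesis by auto
  qed
  have es: "s = 1 \<or> s = -1" unfolding s_def by auto
  have eN: "i \<in> N \<Longrightarrow> (e i = 1 \<or> e i = -1)" for i unfolding e_def d_def using es by auto
  have dpos: "dist i > 0" if "i\<in>N" for i using Nprop[OF that] eN[OF that] unfolding dist_def by auto
  have Nne: "N \<noteq> {}" using ne N_def by auto
  have tpos: "t > 0" unfolding t_def using fN Nne dpos by simp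
  have tle: "t \<le> dist i" if "i\<in>N" for i unfolding t_def using fN that by auto
  have "t \<in> dist ` N" unfolding t_def using Min_in[of "dist ` N"] fN Nne by auto
  then obtain i0 where i0: "i0 \<in> N" "t = dist i0" by auto
  have zN: "(y i > 1/2 \<longrightarrow> 1/2 \<le> z i \<and> z i \<le> 1) \<and> (y i < 1/2 \<longrightarrow> 0 \<le> z i \<and> z i \<le> 1/2)" if "i \<in> N" for i
    using eN[OF that] tle[OF that] tpos Nprop[OF that] unfolding z_def dist_def by auto
  have zi0: "z i0 = 0 \<or> z i0 = 1/2 \<or> z i0 = 1"
    using eN[OF i0(1)] i0(2) unfolding z_def dist_def by auto
  have zout: "i \<notin> N \<Longrightarrow> z i = y i" for i unfolding z_def e_def d_def by auto
  have opp: "z i + z j = y i + y j" if "i \<in> N" "j \<in> N" "y i < 1/2" "y j > 1/2" for i j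
    using that unfolding z_def e_def d_def by auto
  have cz: "cst n w x z = cst n w x y + t * (s * W)"
    unfolding cst_def V_def[symmetric] W_def z_def e_def
    by (simp add: algebra_simps sum.distrib sum_distrib_left)
  have sW: "s * W \<le> 0" unfolding s_def by auto
  have costle: "cst n w x z \<le> cst n w x y"
    using cz sW tpos by (simp add: mult_nonneg_nonpos)
  have sub: "nh n x z \<subseteq> N - {i0}"
  proof
    fix i assume i: "i \<in> nh n x z"
    then have iV: "i \<in> V" and zi: "z i \<noteq> 0 \<and> z i \<noteq> 1/2 \<and> z i \<noteq> 1" unfolding nh_def V_def by auto
    have "i \<in> N"
    proof (rule ccontr)
      assume "i \<notin> N"
      then have "z i = y i" using zout by auto
      then show False using zi iV `i \<notin> N` unfolding N_def nh_def V_def by auto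
    qed
    moreover have "i \<noteq> i0" using zi zi0 by auto
    ultimately show "i \<in> N - {i0}" by auto
  qed
  have card: "card (nh n x z) < card N"
  proof -
    have "nh n x z \<subset> N" using sub i0(1) by auto
    then show ?thesis using fN psubset_card_mono by auto
  qed
  have zV: "0 \<le> z i \<and> z i \<le> 1" if "i \<in> V" for i
  proof (cases "i \<in> N")
    case True then show ?thesis using zN[OF True] Nprop[OF True] by (cases "y i > 1/2") auto
  next
    case False then show ?thesis using zout b01 that by auto
  qed
  have zhalf: "y i \<ge> 1/2 \<Longrightarrow> z i \<ge> 1/2" if "i \<in> V" for i
    using zN zout Nprop by (cases "i \<in> N") force+
  have zedge: "z i + z j \<ge> 1" if "{i,j} \<in> Ex E x" for i j
  proof -
    have ij: "i \<in> V" "j \<in> V" using edge_in_V[OF G that] V_def by auto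
    have s1: "y i + y j \<ge> 1" using F that unfolding LP_feasible_def by auto
    have yb: "0 \<le> y i \<and> y i \<le> 1" "0 \<le> y j \<and> y j \<le> 1" using b01 ij by auto
    show ?thesis
    proof (cases "y i < 1/2")
      case True
      then have yj: "y j > 1/2" using s1 by auto
      show ?thesis
      proof (cases "y j = 1")
        case True
        then have "j \<notin> N" using Nprop by force
        then have "z j = 1" using zout True by auto
        then show ?thesis using zV ij by force
      next
        case False
        then have jN: "j \<in> N" using yj yb unfolding N_def nh_def V_def using ij V_def by auto
        have "y i \<noteq> 0" using False s1 yb by auto
        then have iN: "i \<in> N" using True ij unfolding N_def nh_def V_def by auto
        show ?thesis using opp[OF iN jN True yj] s1 by auto
      qed
    next
      case False
      note Fi = False
      show ?thesis
      proof (cases "y j < 1/2")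
        case True
        then have yi: "y i > 1/2" using s1 by auto
        show ?thesis
        proof (cases "y i = 1")
          case True
          then have "i \<notin> N" using Nprop by force
          then have "z i = 1" using zout True by auto
          then show ?thesis using zV ij by force
        next
          case False
          then have iN: "i \<in> N" using yi yb unfolding N_def nh_def V_def using ij V_def by auto
          have "y j \<noteq> 0" using False s1 yb by auto
          then have jN: "j \<in> N" using True ij unfolding N_def nh_def V_def by auto
          show ?thesis using opp[OF jN iN True yi] s1 by auto
        qed
      next
        case False
        have "z i \<ge> 1/2" "z j \<ge> 1/2" using Fi False zhalf ij by auto
        then show ?thesis by auto
      qed
    qed
  qed
  have "LP_feasible n E x z" unfolding LP_feasible_def using zV zedge V_def by auto
  then show ?thesis using costle card N_def by auto
qed

lemma half_exists:
  assumes G: "wvc_graph n E w"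
  shows "LP_feasible n E x y \<Longrightarrow> \<exists>z. LP_feasible n E x z \<and> nh n x z = {} \<and> cst n w x z \<le> cst n w x y"
proof (induction "card (nh n x y)" arbitrary: y rule: less_induct)
  case less
  show ?case
  proof (cases "nh n x y = {}")
    case True then show ?thesis using less.prems by auto
  next
    case False
    from step[OF G less.prems False] obtain z where z: "LP_feasible n E x z" "cst n w x z \<le> cst n w x y"
      "card (nh n x z) < card (nh n x y)" by blast
    from less.hyps[OF z(3) z(1)] obtain u where "LP_feasible n E x u" "nh n x u = {}" "cst n w x u \<le> cst n w x z" by blast
    then show ?thesis using z(2) by force
  qed
qed

lemma one_feasible: "LP_feasible n E x (\<lambda>_. 1)" unfolding LP_feasible_def by auto

lemma cst_nonneg: "LP_feasible n E x y \<Longrightarrow> 0 \<le> cst n w x y"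
  unfolding cst_def LP_feasible_def by (auto intro!: sum_nonneg)

lemma LP_le: "LP_feasible n E x y \<Longrightarrow> LP n E w x \<le> cst n w x y"
  unfolding LP_def
  apply (rule cInf_lower)
   apply (auto simp: cst_def)[1]
  apply (rule bdd_belowI[of _ 0])
  using cst_nonneg unfolding cst_def by auto

lemma LP_nonneg: "0 \<le> LP n E w x"
  unfolding LP_def
  apply (rule cInf_greatest)
  using one_feasible apply blast
  using cst_nonneg unfolding cst_def by auto

lemma LP_attained:
  assumes G: "wvc_graph n E w"
  shows "\<exists>z. LP_feasible n E x z \<and> nh n x z = {} \<and> cst n w x z = LP n E w x"
proof -
  define V where "V = Vx n x"
  define H where "H = {z. LP_feasible n E x z \<and> nh n x z = {}}"
  define C where "C = cst n w x ` H"
  have "C \<subseteq> (\<lambda>g. \<Sum>i\<in>V. real (w i) * g i) ` (PiE V (\<lambda>_. {0::real,1/2,1}))"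
  proof
    fix c assume "c \<in> C"
    then obtain z where z: "z \<in> H" "c = cst n w x z" unfolding C_def by auto
    have "\<forall>i\<in>V. z i \<in> {0::real,1/2,1}"
    proof
      fix i assume "i \<in> V"
      then have "\<not> (z i \<noteq> 0 \<and> z i \<noteq> 1/2 \<and> z i \<noteq> 1)" using z(1) unfolding H_def nh_def V_def by blast
      then show "z i \<in> {0::real,1/2,1}" by blast
    qed
    then have "restrict z V \<in> PiE V (\<lambda>_. {0::real,1/2,1})" by (simp add: restrict_PiE_iff)
    moreover have "c = (\<Sum>i\<in>V. real (w i) * restrict z V i)" using z(2) unfolding cst_def V_def by simp
    ultimately show "c \<in> (\<lambda>g. \<Sum>i\<in>V. real (w i) * g i) ` (PiE V (\<lambda>_. {0::real,1/2,1}))" by blast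
  qed
  moreover have "finite (PiE V (\<lambda>_. {0::real,1/2,1}))" using finite_Vx V_def by (simp add: finite_PiE)
  ultimately have fC: "finite C" using finite_surj by blast
  have "(\<lambda>_. 1) \<in> H" unfolding H_def nh_def using one_feasible by auto
  then have Cne: "C \<noteq> {}" unfolding C_def by auto
  have "Min C \<in> C" using fC Cne by auto
  then obtain z0 where z0: "z0 \<in> H" "cst n w x z0 = Min C" unfolding C_def by auto
  have "LP n E w x = Min C"
    unfolding LP_def
  proof (rule cInf_eq_minimum)
    show "Min C \<in> {\<Sum>i\<in>Vx n x. real (w i) * y i |y. LP_feasible n E x y}"
      using z0 unfolding H_def cst_def by (metis (mono_tags, lifting) mem_Collect_eq)
    fix a assume "a \<in> {\<Sum>i\<in>Vx n x. real (w i) * y i |y. LP_feasible n E x y}"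
    then obtain y where y: "LP_feasible n E x y" "a = cst n w x y" unfolding cst_def by auto
    obtain u where u: "LP_feasible n E x u" "nh n x u = {}" "cst n w x u \<le> cst n w x y"
      using half_exists[OF G y(1)] by blast
    have "cst n w x u \<in> C" unfolding C_def H_def using u by auto
    then have "Min C \<le> cst n w x u" using fC by auto
    then show "Min C \<le> a" using u y by auto
  qed
  then show ?thesis using z0 unfolding H_def by auto
qed

lemma Vx_upd: "\<not> x v \<Longrightarrow> v < n \<Longrightarrow> Vx n (x(v := True)) = Vx n x - {v}"
  unfolding Vx_def by auto

lemma feas_upd: "LP_feasible n E x y \<Longrightarrow> \<not> x v \<Longrightarrow> v < n \<Longrightarrow> LP_feasible n E (x(v := True)) y"
  unfolding LP_feasible_def Vx_def Ex_def by auto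

lemma Cost_upd: "\<not> x v \<Longrightarrow> v < n \<Longrightarrow> Cost n w (x(v := True)) = Cost n w x + real (w v)"
proof -
  assume a: "\<not> x v" "v < n"
  have "Cost n w (x(v := True)) = real (w v) + (\<Sum>i\<in>{..<n} - {v}. real (w i) * (if (x(v:=True)) i then 1 else 0))"
    unfolding Cost_def using a by (simp add: sum.remove[of "{..<n}" v])
  also have "(\<Sum>i\<in>{..<n} - {v}. real (w i) * (if (x(v:=True)) i then 1 else 0)) = (\<Sum>i\<in>{..<n} - {v}. real (w i) * (if x i then 1 else 0))"
    by (rule sum.cong) auto
  also have "\<dots> = Cost n w x"
    unfolding Cost_def using a by (simp add: sum.remove[of "{..<n}" v])
  finally show ?thesis by (simp add: fun_upd_def)
qed

theorem lemma8:
  fixes n :: nat and E :: "nat set set" and w :: "nat \<Rightarrow> nat" and x :: "nat \<Rightarrow> bool"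
  assumes "wvc_graph n E w"
    and "Cost n w x + 2 * LP n E w x \<le> 2 * OPT n E w"
    and "b2 n E w x > 0"
  shows "\<exists>i<n. Cost n w (x(i := \<not> x i)) + 2 * LP n E w (x(i := \<not> x i)) \<le> 2 * OPT n E w
               \<and> b2 n E w (x(i := \<not> x i)) < b2 n E w x"
proof -
  note G = assms(1)
  define V where "V = Vx n x"
  define L where "L = LP n E w x"
  have n1: "n \<ge> 1"
  proof (rule ccontr)
    assume "\<not> n \<ge> 1"
    then have "n = 0" by auto
    then have "b2 n E w x = 0" unfolding b2_def delta_def log_def by simp
    then show False using assms(3) by simp
  qed
  define B where "B = 1 + delta n"
  have B: "B = 1 + 1 / (2 * real n)" unfolding B_def delta_def by simp
  have B1: "B > 1" using B n1 by simp
  have L0: "L \<ge> 0" unfolding L_def by (rule LP_nonneg)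
  have Lpos: "L > 0"
  proof (rule ccontr)
    assume "\<not> L > 0"
    then have "L = 0" using L0 by auto
    then have "b2 n E w x = 0" unfolding b2_def L_def by simp
    then show False using assms(3) by simp
  qed
  obtain z0 where z0: "LP_feasible n E x z0" "nh n x z0 = {}" "cst n w x z0 = L"
    using LP_attained[OF G] L_def by blast
  have zval: "z0 i = 0 \<or> z0 i = 1/2 \<or> z0 i = 1" if "i \<in> V" for i
    using z0(2) that unfolding nh_def V_def by blast
  define f where "f i = real (w i) * z0 i" for i
  have fV: "finite V" unfolding V_def by (rule finite_Vx)
  have Vne: "V \<noteq> {}"
  proof
    assume "V = {}"
    then have "L = 0" using z0(3) unfolding cst_def V_def by simp
    then show False using Lpos by simp
  qed
  have "Max (f ` V) \<in> f ` V" using fV Vne by auto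
  then obtain v where v: "v \<in> V" "f v = Max (f ` V)" by auto
  have vmax: "f i \<le> f v" if "i \<in> V" for i using v fV that by auto
  define m where "m = f v"
  have vn: "v < n" "\<not> x v" using v(1) unfolding V_def Vx_def by auto
  have LV: "L = (\<Sum>i\<in>V. f i)" using z0(3) unfolding cst_def V_def f_def by simp
  have "L \<le> (\<Sum>i\<in>V. m)" unfolding LV m_def by (rule sum_mono) (use vmax in auto)
  then have Lm: "L \<le> real (card V) * m" by simp
  have mpos: "m > 0"
  proof (rule ccontr)
    assume "\<not> m > 0"
    then have "real (card V) * m \<le> 0" by (simp add: mult_nonneg_nonpos)
    then show False using Lm Lpos by simp
  qed
  have cardV: "card V \<le> n"
  proof -
    have "V \<subseteq> {..<n}" unfolding V_def Vx_def by auto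
    then show ?thesis using card_mono[of "{..<n}" V] by simp
  qed
  have Lnm: "L \<le> real n * m"
  proof -
    have "real (card V) * m \<le> real n * m" using cardV mpos by (simp add: mult_right_mono)
    then show ?thesis using Lm by simp
  qed
  have wv: "w v > 0" using G vn unfolding wvc_graph_def by auto
  have z0v: "z0 v \<ge> 1/2"
  proof -
    have "z0 v \<noteq> 0" using mpos unfolding m_def f_def by auto
    then show ?thesis using zval[OF v(1)] by auto
  qed
  have m2: "2 * m \<ge> real (w v)"
  proof -
    have "real (w v) * 1 \<le> real (w v) * (2 * z0 v)" using z0v by (intro mult_left_mono) auto
    then show ?thesis unfolding m_def f_def by (simp add: algebra_simps)
  qed
  have mhalf: "m \<ge> 1/2" using m2 wv by simp
  define x' where "x' = x(v := True)"
  have xx: "x(v := \<not> x v) = x'" unfolding x'_def using vn by simp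
  define L' where "L' = LP n E w x'"
  have L'0: "L' \<ge> 0" unfolding L'_def by (rule LP_nonneg)
  have L'le: "L' \<le> L - m"
  proof -
    have "L' \<le> cst n w x' z0" unfolding L'_def x'_def by (rule LP_le[OF feas_upd[of n E x z0 v, OF z0(1) vn(2) vn(1)]])
    also have "cst n w x' z0 = (\<Sum>i\<in>V - {v}. f i)"
      unfolding cst_def x'_def Vx_upd[of x v n, OF vn(2) vn(1)] V_def f_def by simp
    also have "\<dots> = L - m" unfolding LV m_def using sum_diff1[of V f v] fV v(1) by simp
    finally show ?thesis .
  qed
  have cost: "Cost n w x' + 2 * L' \<le> 2 * OPT n E w"
    using Cost_upd[of x v n w, OF vn(2) vn(1)] x'_def assms(2) L_def L'le m2 by simp
  have key: "(1 + L') * B \<le> 1 + L"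
  proof -
    have "(1 + L') * B \<le> (1 + L - m) * B" using L'le B1 by (simp add: mult_right_mono)
    also have "\<dots> \<le> 1 + L"
    proof -
      have "1 * m \<le> real n * m" using n1 mpos by (intro mult_right_mono) auto
      then have nm: "real n * m \<ge> 1/2" using mhalf by linarith
      have "1 + L \<le> m * (2 * real n + 1)" using Lnm nm mhalf by (simp add: algebra_simps)
      moreover have "(1 + L - m) * (2 * real n + 1) = (1 + L) * (2 * real n) + (1 + L) - m * (2 * real n + 1)"
        by (simp add: algebra_simps)
      ultimately have "(1 + L - m) * (2 * real n + 1) \<le> (1 + L) * (2 * real n)" by linarith
      then have "(1 + L - m) * (2 * real n + 1) / (2 * real n) \<le> 1 + L" using n1 by (simp add: divide_simps)
      moreover have "(1 + L - m) * B = (1 + L - m) * (2 * real n + 1) / (2 * real n)" unfolding B using n1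
        by (simp add: field_simps)
      ultimately show ?thesis by simp
    qed
    finally show ?thesis .
  qed
  have logs: "log B (1 + L') + 1 \<le> log B (1 + L)"
  proof -
    have "log B (1 + L') + 1 = log B ((1 + L') * B)" using B1 L'0 by (simp add: log_mult)
    also have "\<dots> \<le> log B (1 + L)" using key B1 L'0 L0 by (subst log_le_cancel_iff) auto
    finally show ?thesis .
  qed
  have "b2 n E w x' < b2 n E w x"
  proof -
    have "b2 n E w x' + 1 = \<lceil>log B (1 + L') + 1\<rceil>" unfolding b2_def B_def L'_def by simp
    also have "\<dots> \<le> \<lceil>log B (1 + L)\<rceil>" using logs by (rule ceiling_mono)
    also have "\<dots> = b2 n E w x" unfolding b2_def B_def L_def by simp
    finally show ?thesis by simp
  qed
  then show ?thesis using cost vn(1) xx L'_def by auto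
qed

end
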